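(* For all $\varepsilon>0$ there exist $c,n_0\in\mathbb{N}$ such that for all primes $p\ge n_0$ the following holds. If $\delta\ge c/\log p$ (with $p^{\delta}$ an integer) and $r$ is a positive integer, then every proper $(r,p^{\delta})$-GAP $X\subseteq\mathbb{Z}_p$ is an $(r/p^{0.9\delta},\,0.1,\,\varepsilon)$-additive source of entropy rate $\delta r$ in $(\mathbb{Z}_p,+)$.
   Context: An $(r,s)$-GAP in $\mathbb{Z}_p$ is a set $\{b_0+\sum_{i=1}^r a_ib_i: a_i\in\mathbb{Z},\ 0\le a_i\le s-1\}$ with $b_0,\dots,b_r\in\mathbb{Z}_p$; proper means all $s^r$ sums are distinct. For $X\subseteq\mathbb{Z}_p$, $\mathrm{Sym}_{1-\alpha}(X)=\{g:|X\cap(X+g)|\ge(1-\alpha)|X|\}$, and $X$ is $(\alpha,\beta,\tau)$-additive if $|X+X|\le|X|^{1+\tau}$ and $|\mathrm{Sym}_{1-\alpha}(X)|\ge|X|^{\beta}$. Entropy rate $\delta'$ means $|X|\ge p^{\delta'}$. *)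

theory Defs
  imports "HOL-Analysis.Analysis"
begin

text \<open>Z_p is modelled by the residues {0..<p} :: int set with addition mod p.\<close>

definition gap_map :: "int \<Rightarrow> int \<Rightarrow> (nat \<Rightarrow> int) \<Rightarrow> nat \<Rightarrow> (nat \<Rightarrow> nat) \<Rightarrow> int" where
  "gap_map p b0 b r a = (b0 + (\<Sum>i=1..r. int (a i) * b i)) mod p"

definition gap_coeffs :: "nat \<Rightarrow> nat \<Rightarrow> (nat \<Rightarrow> nat) set" where
  "gap_coeffs r s = PiE {1..r} (\<lambda>_. {0..<s})"

definition GAP :: "int \<Rightarrow> int \<Rightarrow> (nat \<Rightarrow> int) \<Rightarrow> nat \<Rightarrow> nat \<Rightarrow> int set" where
  "GAP p b0 b r s = gap_map p b0 b r ` gap_coeffs r s"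

definition proper_GAP :: "int \<Rightarrow> int \<Rightarrow> (nat \<Rightarrow> int) \<Rightarrow> nat \<Rightarrow> nat \<Rightarrow> bool" where
  "proper_GAP p b0 b r s = inj_on (gap_map p b0 b r) (gap_coeffs r s)"

definition sumset_mod :: "int \<Rightarrow> int set \<Rightarrow> int set \<Rightarrow> int set" where
  "sumset_mod p X Y = {(x + y) mod p | x y. x \<in> X \<and> y \<in> Y}"

definition shift_mod :: "int \<Rightarrow> int set \<Rightarrow> int \<Rightarrow> int set" where
  "shift_mod p X g = (\<lambda>x. (x + g) mod p) ` X"

definition Sym :: "int \<Rightarrow> real \<Rightarrow> int set \<Rightarrow> int set" where
  "Sym p t X = {g \<in> {0..<p}. real (card (X \<inter> shift_mod p X g)) \<ge> t * real (card X)}"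

definition additive :: "int \<Rightarrow> real \<Rightarrow> real \<Rightarrow> real \<Rightarrow> int set \<Rightarrow> bool" where
  "additive p \<alpha> \<beta> \<tau> X \<longleftrightarrow>
     real (card (sumset_mod p X X)) \<le> real (card X) powr (1 + \<tau>) \<and>
     real (card (Sym p (1 - \<alpha>) X)) \<ge> real (card X) powr \<beta>"

definition entropy_rate :: "int \<Rightarrow> real \<Rightarrow> int set \<Rightarrow> bool" where
  "entropy_rate p d X \<longleftrightarrow> real (card X) \<ge> real_of_int p powr d"

end

theory Submission imports Defs begin

lemma card_coeffs: "card (gap_coeffs r s) = s ^ r"
  unfolding gap_coeffs_def by (simp add: card_PiE)

lemma finite_coeffs: "finite (gap_coeffs r s)"
  unfolding gap_coeffs_def by (simp add: finite_PiE)

lemma card_GAP: "proper_GAP p b0 b r s \<Longrightarrow> card (GAP p b0 b r s) = s ^ r"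
  unfolding GAP_def proper_GAP_def by (simp add: card_image card_coeffs)

lemma sumset_sub:
  assumes "s \<ge> 1"
  shows "sumset_mod p (GAP p b0 b r s) (GAP p b0 b r s) \<subseteq> GAP p (2*b0) b r (2 * s - 1)"
proof
  fix z assume "z \<in> sumset_mod p (GAP p b0 b r s) (GAP p b0 b r s)"
  then obtain a a' where a: "a \<in> gap_coeffs r s" and a': "a' \<in> gap_coeffs r s"
    and z: "z = (gap_map p b0 b r a + gap_map p b0 b r a') mod p"
    unfolding sumset_mod_def GAP_def by auto
  define c where "c = (\<lambda>i. if i \<in> {1..r} then a i + a' i else undefined)"
  have c: "c \<in> gap_coeffs r (2 * s - 1)"
  proof -
    have "\<forall>i\<in>{1..r}. a i + a' i < 2 * s - 1"
    proof
      fix i assume "i \<in> {1..r}"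
      then have "a i < s" "a' i < s" using a a' unfolding gap_coeffs_def by (auto simp: PiE_iff)
      then show "a i + a' i < 2 * s - 1" by linarith
    qed
    then show ?thesis unfolding c_def gap_coeffs_def by (auto simp: PiE_iff extensional_def)
  qed
  have "(\<Sum>i=1..r. int (c i) * b i) = (\<Sum>i=1..r. int (a i) * b i) + (\<Sum>i=1..r. int (a' i) * b i)"
    unfolding c_def by (simp add: sum.distrib[symmetric] algebra_simps)
  then have "z = gap_map p (2*b0) b r c"
    unfolding z gap_map_def by (simp add: mod_add_eq algebra_simps)
  then show "z \<in> GAP p (2*b0) b r (2 * s - 1)" using c unfolding GAP_def by blast
qed

lemma prod_ineq:
  fixes y :: "nat \<Rightarrow> real" and s :: real
  assumes "finite I" "s > 0" "\<And>i. i \<in> I \<Longrightarrow> 0 \<le> y i \<and> y i \<le> s"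
  shows "(\<Prod>i\<in>I. (s - y i)) \<ge> s ^ card I * (1 - (\<Sum>i\<in>I. y i) / s)"
  using assms
proof (induction I rule: finite_induct)
  case empty then show ?case by simp
next
  case (insert j I)
  let ?S = "(\<Sum>i\<in>I. y i)"
  have IH: "(\<Prod>i\<in>I. (s - y i)) \<ge> s ^ card I * (1 - ?S / s)" using insert by auto
  have yj: "0 \<le> y j" "y j \<le> s" using insert by auto
  have S0: "?S \<ge> 0" using insert by (auto intro: sum_nonneg)
  have "(\<Prod>i\<in>insert j I. (s - y i)) = (s - y j) * (\<Prod>i\<in>I. (s - y i))" using insert by simp
  also have "\<dots> \<ge> (s - y j) * (s ^ card I * (1 - ?S / s))"
    using IH yj by (intro mult_left_mono) auto
  finally have 1: "(\<Prod>i\<in>insert j I. (s - y i)) \<ge> (s - y j) * (s ^ card I * (1 - ?S / s))" .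
  have "(s - y j) * (s ^ card I * (1 - ?S / s)) = s ^ Suc (card I) * ((1 - y j / s) * (1 - ?S/s))"
    using \<open>s > 0\<close> by (simp add: field_simps)
  also have "\<dots> \<ge> s ^ Suc (card I) * (1 - (y j + ?S) / s)"
  proof (rule mult_left_mono)
    have "(y j / s) * (?S / s) \<ge> 0" using yj S0 \<open>s>0\<close> by simp
    then show "1 - (y j + ?S) / s \<le> (1 - y j / s) * (1 - ?S / s)"
      by (simp add: algebra_simps add_divide_distrib)
  qed (use \<open>s>0\<close> in simp)
  finally have 2: "s ^ Suc (card I) * (1 - (y j + ?S) / s) \<le> (\<Prod>i\<in>insert j I. (s - y i))"
    using 1 by linarith
  have "s ^ card (insert j I) * (1 - (\<Sum>i\<in>insert j I. y i) / s) = s ^ Suc (card I) * (1 - (y j + ?S)/s)"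
    using insert by simp
  then show ?case using 2 by simp
qed

lemma sym_bound:
  assumes proper: "proper_GAP p b0 b r s" and p: "p > 0" and k: "1 \<le> k" "k \<le> s"
    and al: "real r * real (k - 1) \<le> \<alpha> * real s"
  shows "real (card (Sym p (1 - \<alpha>) (GAP p b0 b r s))) \<ge> real k ^ r"
proof -
  let ?X = "GAP p b0 b r s"
  define T where "T = gap_coeffs r k"
  define g where "g t = (\<Sum>i=1..r. int (t i) * b i) mod p" for t :: "nat \<Rightarrow> nat"
  have Tsub: "T \<subseteq> gap_coeffs r s" using k unfolding T_def gap_coeffs_def by (auto simp: PiE_iff) (meson atLeastAtMost_iff less_le_trans)
  have inj: "inj_on g T"
  proof
    fix t t' assume tT: "t \<in> T" "t' \<in> T" and e: "g t = g t'"
    have "gap_map p b0 b r t = gap_map p b0 b r t'"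
      unfolding gap_map_def using e unfolding g_def by (metis mod_add_right_eq)
    then show "t = t'" using proper tT Tsub unfolding proper_GAP_def inj_on_def by blast
  qed
  have s0: "real s > 0" using k by simp
  have gsym: "g t \<in> Sym p (1 - \<alpha>) ?X" if tT: "t \<in> T" for t
  proof -
    define A where "A = PiE {1..r} (\<lambda>i. {t i..<s})"
    have tb: "\<forall>i\<in>{1..r}. t i < k" using tT unfolding T_def gap_coeffs_def by (auto simp: PiE_iff)
    have tbs: "\<And>i. i \<in> {1..r} \<Longrightarrow> t i \<le> s \<and> t i \<le> k - 1"
    proof -
      fix i assume "i \<in> {1..r}"
      then have "t i < k" using tb by blast
      then show "t i \<le> s \<and> t i \<le> k - 1" using k by linarith
    qed
    have Asub: "A \<subseteq> gap_coeffs r s" unfolding A_def gap_coeffs_def by (auto simp: PiE_iff)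
    have imgsub: "gap_map p b0 b r ` A \<subseteq> ?X \<inter> shift_mod p ?X (g t)"
    proof
      fix z assume "z \<in> gap_map p b0 b r ` A"
      then obtain a where aA: "a \<in> A" and z: "z = gap_map p b0 b r a" by blast
      define a' where "a' = (\<lambda>i. if i \<in> {1..r} then a i - t i else undefined)"
      have ai: "\<forall>i\<in>{1..r}. t i \<le> a i \<and> a i < s" using aA unfolding A_def by (auto simp: PiE_iff)
      have a'c: "a' \<in> gap_coeffs r s" using ai unfolding a'_def gap_coeffs_def
        by (auto simp: PiE_iff extensional_def)
      have "(\<Sum>i=1..r. int (a i) * b i) = (\<Sum>i=1..r. int (a' i) * b i) + (\<Sum>i=1..r. int (t i) * b i)"
      proof -
        have "(\<Sum>i=1..r. int (a i) * b i) = (\<Sum>i=1..r. int (a' i) * b i + int (t i) * b i)"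
          using ai unfolding a'_def by (intro sum.cong) (auto simp: of_nat_diff algebra_simps)
        then show ?thesis by (simp add: sum.distrib)
      qed
      then have "z = (gap_map p b0 b r a' + g t) mod p"
        unfolding z gap_map_def g_def by (simp add: mod_add_eq algebra_simps)
      moreover have "z \<in> ?X" using aA Asub z unfolding GAP_def by blast
      moreover have "gap_map p b0 b r a' \<in> ?X" using a'c unfolding GAP_def by blast
      ultimately show "z \<in> ?X \<inter> shift_mod p ?X (g t)" unfolding shift_mod_def by blast
    qed
    have finX: "finite ?X" unfolding GAP_def by (simp add: finite_coeffs)
    have "card (gap_map p b0 b r ` A) = card A"
      using proper Asub unfolding proper_GAP_def by (intro card_image) (rule inj_on_subset)
    also have "card A = (\<Prod>i\<in>{1..r}. s - t i)" unfolding A_def by (simp add: card_PiE)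
    finally have cA: "card (gap_map p b0 b r ` A) = (\<Prod>i\<in>{1..r}. s - t i)" .
    have le1: "card (gap_map p b0 b r ` A) \<le> card (?X \<inter> shift_mod p ?X (g t))"
      using imgsub finX by (intro card_mono) auto
    have "real (\<Prod>i\<in>{1..r}. s - t i) = (\<Prod>i\<in>{1..r}. real s - real (t i))"
      unfolding of_nat_prod
    proof (intro prod.cong refl)
      fix i assume "i \<in> {1..r}"
      then have "t i \<le> s" using tbs by blast
      then show "real (s - t i) = real s - real (t i)" by (simp add: of_nat_diff)
    qed
    also have "\<dots> \<ge> real s ^ card {1..r} * (1 - (\<Sum>i\<in>{1..r}. real (t i)) / real s)"
      using tbs s0 by (intro prod_ineq) auto
    finally have P: "real (\<Prod>i\<in>{1..r}. s - t i) \<ge> real s ^ r * (1 - (\<Sum>i\<in>{1..r}. real (t i)) / real s)"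
      by simp
    have "(\<Sum>i\<in>{1..r}. real (t i)) \<le> (\<Sum>i\<in>{1..r}. real (k - 1))"
      using tbs by (intro sum_mono) auto
    then have St: "(\<Sum>i\<in>{1..r}. real (t i)) \<le> real r * real (k - 1)" by simp
    have "(\<Sum>i\<in>{1..r}. real (t i)) / real s \<le> \<alpha>"
      using St al s0 by (simp add: divide_le_eq)
    then have "real s ^ r * (1 - \<alpha>) \<le> real s ^ r * (1 - (\<Sum>i\<in>{1..r}. real (t i)) / real s)"
      by (intro mult_left_mono) auto
    then have "(1 - \<alpha>) * real (card ?X) \<le> real (card (?X \<inter> shift_mod p ?X (g t)))"
      using P cA le1 card_GAP[OF proper]
      by (smt (verit, best) mult.commute of_nat_le_iff of_nat_power)
    moreover have "g t \<in> {0..<p}" unfolding g_def using p by simp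
    ultimately show ?thesis unfolding Sym_def by blast
  qed
  have finS: "finite (Sym p (1 - \<alpha>) ?X)" unfolding Sym_def
    by (rule finite_subset[of _ "{0..<p}"]) auto
  have "card (g ` T) \<le> card (Sym p (1 - \<alpha>) ?X)"
    using gsym finS by (intro card_mono) auto
  moreover have "card (g ` T) = k ^ r" using inj by (simp add: card_image T_def card_coeffs)
  ultimately show ?thesis by (metis of_nat_le_iff of_nat_power)
qed

theorem lemma3p6:
  fixes \<epsilon> :: real
  assumes "\<epsilon> > 0"
  shows "\<exists>c n0 :: nat. \<forall>p :: nat. prime p \<and> p \<ge> n0 \<longrightarrow>
    (\<forall>(\<delta>::real) (s::nat) (r::nat) (b0::int) (b::nat \<Rightarrow> int).
       \<delta> \<ge> real c / ln (real p) \<and> real p powr \<delta> = real s \<and> r > 0 \<and>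
       b0 \<in> {0..<int p} \<and> (\<forall>i\<in>{1..r}. b i \<in> {0..<int p}) \<and>
       proper_GAP (int p) b0 b r s \<longrightarrow>
       additive (int p) (real r / real p powr (0.9 * \<delta>)) 0.1 \<epsilon> (GAP (int p) b0 b r s) \<and>
       entropy_rate (int p) (\<delta> * real r) (GAP (int p) b0 b r s))"
proof -
  define c :: nat where "c = nat \<lceil>1/\<epsilon>\<rceil> + 1"
  have c1: "real c \<ge> 1" unfolding c_def by simp
  have ce: "real c \<ge> 1/\<epsilon>" unfolding c_def by linarith
  show ?thesis
  proof (rule exI[of _ c], rule exI[of _ 2], intro allI impI conjI)
    fix p :: nat and \<delta> :: real and s r :: nat and b0 :: int and b :: "nat \<Rightarrow> int"
    assume hp: "prime p \<and> p \<ge> 2"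
    assume h: "\<delta> \<ge> real c / ln (real p) \<and> real p powr \<delta> = real s \<and> r > 0 \<and>
       b0 \<in> {0..<int p} \<and> (\<forall>i\<in>{1..r}. b i \<in> {0..<int p}) \<and>
       proper_GAP (int p) b0 b r s"
    let ?X = "GAP (int p) b0 b r s"
    have p2: "real p \<ge> 2" using hp by simp
    have L: "ln (real p) > 0" using p2 by simp
    have dL: "\<delta> * ln (real p) \<ge> real c" using h L by (simp add: divide_le_eq)
    have sexp: "real s = exp (\<delta> * ln (real p))" using h p2 by (simp add: powr_def)
    have "real s \<ge> 1 + \<delta> * ln (real p)" unfolding sexp by (rule exp_ge_add_one_self)
    then have s2: "real s \<ge> 2" using dL c1 by linarith
    then have s1: "s \<ge> 1" by simp
    have proper: "proper_GAP (int p) b0 b r s" using h by blast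
    have cardX: "card ?X = s ^ r" using card_GAP[OF proper] .
    show "entropy_rate (int p) (\<delta> * real r) ?X"
    proof -
      have "real p powr (\<delta> * real r) = (real p powr \<delta>) powr real r" by (simp add: powr_powr)
      also have "\<dots> = real s ^ r" using h s2 by (simp add: powr_realpow)
      finally show ?thesis unfolding entropy_rate_def cardX by simp
    qed
    have seps: "real s powr \<epsilon> \<ge> 2"
    proof -
      have "real s powr \<epsilon> = exp (\<epsilon> * (\<delta> * ln (real p)))" using s2 sexp by (simp add: powr_def)
      also have "\<dots> \<ge> 1 + \<epsilon> * (\<delta> * ln (real p))" by (rule exp_ge_add_one_self)
      finally have a: "real s powr \<epsilon> \<ge> 1 + \<epsilon> * (\<delta> * ln (real p))" .
      have "\<epsilon> * (\<delta> * ln (real p)) \<ge> \<epsilon> * (1/\<epsilon>)"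
        using dL ce assms by (intro mult_left_mono) auto
      then have "\<epsilon> * (\<delta> * ln (real p)) \<ge> 1" using assms by simp
      then show ?thesis using a by linarith
    qed
    have "card (sumset_mod (int p) ?X ?X) \<le> card (GAP (int p) (2*b0) b r (2 * s - 1))"
      using sumset_sub[OF s1] by (intro card_mono) (auto simp: GAP_def finite_coeffs)
    also have "\<dots> \<le> (2 * s - 1) ^ r" unfolding GAP_def
      by (metis card_coeffs card_image_le finite_coeffs)
    also have "\<dots> \<le> (2 * s) ^ r" by (intro power_mono) auto
    finally have cs: "real (card (sumset_mod (int p) ?X ?X)) \<le> 2 ^ r * real s ^ r"
      by (metis of_nat_le_iff of_nat_mult of_nat_numeral of_nat_power power_mult_distrib)
    have "2 ^ r * real s ^ r \<le> (real s powr \<epsilon>) ^ r * real s ^ r"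
      by (intro mult_right_mono power_mono) (use seps in auto)
    also have "\<dots> = real (card ?X) powr (1 + \<epsilon>)"
    proof -
      have "real (card ?X) powr (1 + \<epsilon>) = real (s^r) * real (s^r) powr \<epsilon>"
        unfolding cardX by (simp add: powr_mult_base)
      also have "real (s^r) powr \<epsilon> = (real s powr real r) powr \<epsilon>" using s2 by (simp add: powr_realpow)
      also have "\<dots> = real s powr (real r * \<epsilon>)" by (simp add: powr_powr)
      also have "\<dots> = (real s powr \<epsilon>) ^ r" using s2 by (simp add: powr_power)
      finally show ?thesis by simp
    qed
    finally have sum_ok: "real (card (sumset_mod (int p) ?X ?X)) \<le> real (card ?X) powr (1 + \<epsilon>)"
      using cs by linarith
    define k where "k = nat \<lfloor>real s powr 0.1\<rfloor> + 1"
    have spos: "real s powr 0.1 \<ge> 0" by simp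
    have kge: "real k \<ge> real s powr 0.1" unfolding k_def using spos by linarith
    have kle1: "real (k - 1) \<le> real s powr 0.1" unfolding k_def using spos by simp
    have slt: "real s powr 0.1 < real s"
    proof -
      have "real s powr 0.1 < real s powr 1" using s2 by (intro powr_less_mono) auto
      then show ?thesis using s2 by simp
    qed
    have k1: "1 \<le> k" unfolding k_def by simp
    have kles: "k \<le> s"
    proof -
      have "real (k - 1) < real s" using kle1 slt by linarith
      then have "k - 1 < s" by linarith
      then show ?thesis using k1 by linarith
    qed
    define \<alpha> where "\<alpha> = real r / real p powr (0.9 * \<delta>)"
    have p09: "real p powr (0.9 * \<delta>) = real s powr 0.9"
    proof -
      have "real p powr (0.9 * \<delta>) = real p powr (\<delta> * 0.9)" by (simp add: mult.commute)
      also have "\<dots> = (real p powr \<delta>) powr 0.9" by (simp add: powr_powr)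
      finally show ?thesis using h by simp
    qed
    have as: "\<alpha> * real s = real r * real s powr 0.1"
    proof -
      have e: "real s powr 0.9 * real s powr 0.1 = real s" using s2 by (simp add: powr_add[symmetric])
      have a0: "real s powr 0.9 > 0" using s2 by simp
      have "\<alpha> * real s = real r / real s powr 0.9 * (real s powr 0.9 * real s powr 0.1)"
        unfolding \<alpha>_def p09 e ..
      also have "\<dots> = real r * real s powr 0.1" using a0 by simp
      finally show ?thesis .
    qed
    have al: "real r * real (k - 1) \<le> \<alpha> * real s"
      unfolding as using kle1 by (intro mult_left_mono) auto
    have pp: "int p > 0" using p2 by simp
    have symk: "real (card (Sym (int p) (1 - \<alpha>) ?X)) \<ge> real k ^ r"
      by (rule sym_bound[OF proper pp k1 kles al])
    have "real (card ?X) powr 0.1 = (real s powr 0.1) ^ r"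
    proof -
      have "real (card ?X) powr 0.1 = (real s powr real r) powr 0.1" unfolding cardX using s2 by (simp add: powr_realpow)
      also have "\<dots> = real s powr (real r * 0.1)" by (simp add: powr_powr)
      also have "\<dots> = (real s powr 0.1) ^ r" using s2 by (simp add: powr_power)
      finally show ?thesis .
    qed
    also have "\<dots> \<le> real k ^ r" using kge spos by (intro power_mono) auto
    finally have sym_ok: "real (card (Sym (int p) (1 - \<alpha>) ?X)) \<ge> real (card ?X) powr 0.1" using symk by linarith
    show "additive (int p) (real r / real p powr (0.9 * \<delta>)) 0.1 \<epsilon> ?X"
      unfolding additive_def using sum_ok sym_ok unfolding \<alpha>_def by blast
  qed
qed

end
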